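(* Let $\bar{G}$ be a finite subgroup of $\mathrm{Aut}(\mathbb{P}^2)$ with $\bar{G}\cong\mathrm{S}_4$ or $\bar{G}\cong\mathrm{A}_4$. Then either there is a $\bar{G}$-invariant point in $\mathbb{P}^2$, or there is at most one $\bar{G}$-orbit in $\mathbb{P}^2$ of length $3$. *)

theory Defs
  imports "HOL-Analysis.Analysis" "HOL-Algebra.Sym_Groups"
begin

definition proj_class :: "complex^3 \<Rightarrow> (complex^3) set" where
  "proj_class v = {c *s v | c. c \<noteq> 0}"

definition P2 :: "(complex^3) set set" where
  "P2 = {proj_class v | v. v \<noteq> 0}"

text \<open>Aut(P^2) = PGL_3(C): classes of invertible 3x3 complex matrices
  modulo nonzero scalars, with multiplication induced by matrix product.\<close>

definition pgl_class :: "complex^3^3 \<Rightarrow> (complex^3^3) set" where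
  "pgl_class A = {mat c ** A | c. c \<noteq> 0}"

definition PGL3 :: "(complex^3^3) set monoid" where
  "PGL3 = \<lparr> carrier = {pgl_class A | A. invertible A},
            mult = (\<lambda>X Y. {A ** B | A B. A \<in> X \<and> B \<in> Y}),
            one = pgl_class (mat 1) \<rparr>"

definition pgl_act :: "(complex^3^3) set \<Rightarrow> (complex^3) set \<Rightarrow> (complex^3) set" where
  "pgl_act X p = {A *v v | A v. A \<in> X \<and> v \<in> p}"

definition pgl_orbit :: "(complex^3^3) set set \<Rightarrow> (complex^3) set \<Rightarrow> (complex^3) set set" where
  "pgl_orbit H p = {pgl_act X p | X. X \<in> H}"

end

theory Submission
  imports Defs
begin

type_synonym cm = "complex^3^3"
type_synonym cv = "complex^3"

lemma mat_mul_entry: "(mat k ** (M::cm)) $ i $ j = k * M $ i $ j"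
  unfolding matrix_matrix_mult_def mat_def
  by (auto simp: if_distrib if_distribR sum.delta'[OF finite] cong: if_cong)

lemma mul_mat_entry: "((M::cm) ** mat k) $ i $ j = M $ i $ j * k"
  unfolding matrix_matrix_mult_def mat_def
  by (auto simp: if_distrib if_distribR sum.delta[OF finite] cong: if_cong)

lemma mat_comm: "mat k ** (M::cm) = M ** mat k"
  by (simp add: vec_eq_iff mat_mul_entry mul_mat_entry mult.commute)

lemma mat_mat: "mat k ** mat l = (mat (k*l) :: cm)"
  by (simp add: vec_eq_iff mat_mul_entry) (simp add: mat_def)

lemma mat_vec: "(mat k ** (M::cm)) *v v = k *s (M *v v)"
  by (simp add: vec_eq_iff matrix_vector_mult_def mat_mul_entry sum_distrib_left mult.assoc)

lemma vec_scal: "(M::cm) *v (k *s v) = k *s (M *v v)"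
  by (simp add: vec_eq_iff matrix_vector_mult_def sum_distrib_left mult.left_commute)

lemma mat_mul_left: "(mat k ** (M::cm)) ** N = mat k ** (M ** N)"
  by (simp add: matrix_mul_assoc)

lemma mat_mul_right: "(M::cm) ** (mat k ** N) = mat k ** (M ** N)"
  by (metis mat_comm matrix_mul_assoc)

lemma mat_mat_mul: "(mat k :: cm) ** (mat l ** M) = mat (k*l) ** M"
  by (simp add: matrix_mul_assoc mat_mat)

lemma mat_vec_eq: "(mat k :: cm) *v v = k *s v"
  using mat_vec[of k "mat 1" v] by simp

lemma pgl_class_self: "A \<in> pgl_class A"
  unfolding pgl_class_def by (rule CollectI, rule exI[of _ 1]) simp

lemma pgl_class_mem: "B \<in> pgl_class A \<longleftrightarrow> (\<exists>c. c \<noteq> 0 \<and> B = mat c ** A)"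
  unfolding pgl_class_def by auto

lemma pgl_class_scal: assumes c: "c \<noteq> 0" shows "pgl_class (mat c ** A) = pgl_class A"
proof (rule Set.set_eqI)
  fix B
  show "B \<in> pgl_class (mat c ** A) \<longleftrightarrow> B \<in> pgl_class A"
  proof
    assume "B \<in> pgl_class (mat c ** A)"
    then obtain d where "d \<noteq> 0" "B = mat d ** (mat c ** A)" by (auto simp: pgl_class_mem)
    then show "B \<in> pgl_class A" using c
      by (auto simp: pgl_class_mem matrix_mul_assoc mat_mat intro!: exI[of _ "d*c"])
  next
    assume "B \<in> pgl_class A"
    then obtain d where "d \<noteq> 0" "B = mat d ** A" by (auto simp: pgl_class_mem)
    then have "B = mat (d/c) ** (mat c ** A)" using c by (simp add: matrix_mul_assoc mat_mat)
    then show "B \<in> pgl_class (mat c ** A)" using c \<open>d \<noteq> 0\<close>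
      unfolding pgl_class_mem by (intro exI[of _ "d/c"]) simp
  qed
qed

lemma pgl_class_eq: "pgl_class A = pgl_class B \<longleftrightarrow> (\<exists>c. c \<noteq> 0 \<and> A = mat c ** B)"
  by (metis pgl_class_mem pgl_class_scal pgl_class_self)

lemma PGL3_mult: "mult PGL3 X Y = {A ** B | A B. A \<in> X \<and> B \<in> Y}"
  unfolding PGL3_def by (simp only: monoid.select_convs)

lemma pgl_mult: "mult PGL3 (pgl_class A) (pgl_class B) = pgl_class (A ** B)"
proof -
  have "{A1 ** B1 | A1 B1. A1 \<in> pgl_class A \<and> B1 \<in> pgl_class B} = pgl_class (A ** B)"
  proof (rule Set.set_eqI, rule iffI)
    fix M assume "M \<in> {A1 ** B1 | A1 B1. A1 \<in> pgl_class A \<and> B1 \<in> pgl_class B}"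
    then obtain c d where "c \<noteq> 0" "d \<noteq> 0" "M = (mat c ** A) ** (mat d ** B)"
      by (auto simp: pgl_class_mem)
    then have "M = mat c ** (A ** (mat d ** B))" using mat_mul_left[of c A "mat d ** B"] by argo
    also have "\<dots> = mat c ** (mat d ** (A ** B))" using mat_mul_right[of A d B] by argo
    also have "\<dots> = mat (c*d) ** (A ** B)" by (rule mat_mat_mul)
    finally have "M = mat (c*d) ** (A ** B)" .
    moreover have "c * d \<noteq> 0" using \<open>c \<noteq> 0\<close> \<open>d \<noteq> 0\<close> by simp
    ultimately
    show "M \<in> pgl_class (A ** B)" unfolding pgl_class_mem by blast
  next
    fix M assume "M \<in> pgl_class (A ** B)"
    then obtain c where "c \<noteq> 0" "M = (mat c ** A) ** B"
      by (auto simp: pgl_class_mem mat_mul_left)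
    then show "M \<in> {A1 ** B1 | A1 B1. A1 \<in> pgl_class A \<and> B1 \<in> pgl_class B}"
      using pgl_class_self[of B] by (auto simp: pgl_class_mem)
  qed
  then show ?thesis by (simp only: PGL3_mult)
qed

lemma invertible_mult': assumes "invertible (A::cm)" "invertible B" shows "invertible (A ** B)"
proof -
  obtain A' where a: "A ** A' = mat 1" "A' ** A = mat 1" using assms(1) unfolding invertible_def by blast
  obtain B' where b: "B ** B' = mat 1" "B' ** B = mat 1" using assms(2) unfolding invertible_def by blast
  have 1: "(A ** B) ** (B' ** A') = mat 1"
    by (metis a(1) b(1) matrix_mul_assoc matrix_mul_lid)
  have 2: "(B' ** A') ** (A ** B) = mat 1"
    by (metis a(2) b(2) matrix_mul_assoc matrix_mul_lid)
  show ?thesis unfolding invertible_def using 1 2 by blast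
qed

lemma invertible_scal: "c \<noteq> 0 \<Longrightarrow> invertible (A::cm) \<Longrightarrow> invertible (mat c ** A)"
proof -
  assume c: "c \<noteq> 0" and A: "invertible A"
  have "invertible (mat c :: cm)" unfolding invertible_def
    by (intro exI[of _ "mat (1/c)"]) (simp add: mat_mat c)
  then show ?thesis using A by (rule invertible_mult')
qed

lemma PGL3_carrier: "carrier PGL3 = {pgl_class A | A. invertible A}"
  unfolding PGL3_def by (simp only: partial_object.select_convs)

lemma PGL3_one: "one PGL3 = pgl_class (mat 1)"
  unfolding PGL3_def by (simp only: monoid.select_convs)

lemma PGL3_carrierE: "x \<in> carrier PGL3 \<Longrightarrow> (\<And>A. x = pgl_class A \<Longrightarrow> invertible A \<Longrightarrow> P) \<Longrightarrow> P"
  unfolding PGL3_carrier by blast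

lemma PGL3_carrierI: "invertible A \<Longrightarrow> pgl_class A \<in> carrier PGL3"
  unfolding PGL3_carrier by blast

lemma PGL3_group: "group PGL3"
proof (rule groupI)
  fix x y assume "x \<in> carrier PGL3" "y \<in> carrier PGL3"
  then show "x \<otimes>\<^bsub>PGL3\<^esub> y \<in> carrier PGL3"
    by (elim PGL3_carrierE) (simp add: pgl_mult PGL3_carrierI invertible_mult')
next
  show "\<one>\<^bsub>PGL3\<^esub> \<in> carrier PGL3"
    unfolding PGL3_one by (rule PGL3_carrierI) (simp add: invertible_def)
next
  fix x y z assume "x \<in> carrier PGL3" "y \<in> carrier PGL3" "z \<in> carrier PGL3"
  then show "x \<otimes>\<^bsub>PGL3\<^esub> y \<otimes>\<^bsub>PGL3\<^esub> z = x \<otimes>\<^bsub>PGL3\<^esub> (y \<otimes>\<^bsub>PGL3\<^esub> z)"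
    by (elim PGL3_carrierE) (simp add: pgl_mult matrix_mul_assoc)
next
  fix x assume "x \<in> carrier PGL3"
  then show "\<one>\<^bsub>PGL3\<^esub> \<otimes>\<^bsub>PGL3\<^esub> x = x"
    by (elim PGL3_carrierE) (simp add: pgl_mult PGL3_one)
next
  fix x assume "x \<in> carrier PGL3"
  then obtain A where x: "x = pgl_class A" and A: "invertible A" by (elim PGL3_carrierE)
  then obtain A' where AA: "A' ** A = mat 1" "A ** A' = mat 1" unfolding invertible_def by blast
  have "invertible A'" unfolding invertible_def using AA by blast
  then have "pgl_class A' \<in> carrier PGL3" by (rule PGL3_carrierI)
  moreover have "pgl_class A' \<otimes>\<^bsub>PGL3\<^esub> x = \<one>\<^bsub>PGL3\<^esub>"
    using AA x by (simp add: pgl_mult PGL3_one)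
  ultimately show "\<exists>y\<in>carrier PGL3. y \<otimes>\<^bsub>PGL3\<^esub> x = \<one>\<^bsub>PGL3\<^esub>" by blast
qed


lemma proj_class_mem: "w \<in> proj_class v \<longleftrightarrow> (\<exists>c. c \<noteq> 0 \<and> w = c *s v)"
  unfolding proj_class_def by blast

lemma proj_class_self: "v \<in> proj_class v"
  unfolding proj_class_mem by (intro exI[of _ 1]) simp

lemma proj_class_scal: assumes c: "c \<noteq> 0" shows "proj_class (c *s v) = proj_class v"
proof (rule Set.set_eqI)
  fix w show "w \<in> proj_class (c *s v) \<longleftrightarrow> w \<in> proj_class v"
    unfolding proj_class_mem
  proof
    assume "\<exists>d. d \<noteq> 0 \<and> w = d *s (c *s v)"
    then obtain d where "d \<noteq> 0" "w = (d * c) *s v" by (auto simp: vector_smult_assoc)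
    then show "\<exists>d. d \<noteq> 0 \<and> w = d *s v" using c by (intro exI[of _ "d*c"]) simp
  next
    assume "\<exists>d. d \<noteq> 0 \<and> w = d *s v"
    then obtain d where d: "d \<noteq> 0" "w = d *s v" by auto
    then have "w = (d / c) *s (c *s v)" using c by (simp add: vector_smult_assoc)
    then show "\<exists>d. d \<noteq> 0 \<and> w = d *s (c *s v)" using c d by (intro exI[of _ "d/c"]) simp
  qed
qed

lemma proj_class_eq: "proj_class u = proj_class v \<longleftrightarrow> (\<exists>c. c \<noteq> 0 \<and> u = c *s v)"
  by (metis proj_class_mem proj_class_scal proj_class_self)

lemma P2E: "p \<in> P2 \<Longrightarrow> (\<And>v. p = proj_class v \<Longrightarrow> v \<noteq> 0 \<Longrightarrow> P) \<Longrightarrow> P"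
  unfolding P2_def by blast

lemma P2I: "v \<noteq> 0 \<Longrightarrow> proj_class v \<in> P2"
  unfolding P2_def by blast

lemma inv_nz: assumes "invertible (A::cm)" "v \<noteq> 0" shows "A *v v \<noteq> 0"
proof
  assume h: "A *v v = 0"
  obtain A' where "A' ** A = mat 1" using assms(1) unfolding invertible_def by blast
  then have "v = A' *v (A *v v)" by (simp add: matrix_vector_mul_assoc)
  then show False using h assms(2) by simp
qed

lemma act_class: "pgl_act (pgl_class A) (proj_class v) = proj_class (A *v v)"
proof (rule Set.set_eqI)
  fix w show "w \<in> pgl_act (pgl_class A) (proj_class v) \<longleftrightarrow> w \<in> proj_class (A *v v)"
  proof
    assume "w \<in> pgl_act (pgl_class A) (proj_class v)"
    then obtain B u where "B \<in> pgl_class A" "u \<in> proj_class v" "w = B *v u"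
      unfolding pgl_act_def by blast
    then obtain c d where "c \<noteq> 0" "d \<noteq> 0" "w = (mat c ** A) *v (d *s v)"
      unfolding pgl_class_mem proj_class_mem by blast
    then have "w = (c * d) *s (A *v v)" "c * d \<noteq> 0"
      by (simp_all add: mat_vec vec_scal vector_smult_assoc)
    then show "w \<in> proj_class (A *v v)" unfolding proj_class_mem by blast
  next
    assume "w \<in> proj_class (A *v v)"
    then obtain c where "c \<noteq> 0" "w = (mat c ** A) *v v"
      unfolding proj_class_mem by (auto simp: mat_vec)
    then show "w \<in> pgl_act (pgl_class A) (proj_class v)"
      unfolding pgl_act_def pgl_class_mem using proj_class_self[of v] by blast
  qed
qed

lemma act_P2: "X \<in> carrier PGL3 \<Longrightarrow> p \<in> P2 \<Longrightarrow> pgl_act X p \<in> P2"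
proof -
  assume "X \<in> carrier PGL3" "p \<in> P2"
  then obtain A v where "X = pgl_class A" "invertible A" "p = proj_class v" "v \<noteq> 0"
    by (elim PGL3_carrierE P2E)
  then show ?thesis by (simp add: act_class P2I inv_nz)
qed

lemma act_mult: "X \<in> carrier PGL3 \<Longrightarrow> Y \<in> carrier PGL3 \<Longrightarrow> p \<in> P2 \<Longrightarrow>
    pgl_act (X \<otimes>\<^bsub>PGL3\<^esub> Y) p = pgl_act X (pgl_act Y p)"
proof -
  assume "X \<in> carrier PGL3" "Y \<in> carrier PGL3" "p \<in> P2"
  then obtain A B v where "X = pgl_class A" "Y = pgl_class B" "p = proj_class v"
    by (elim PGL3_carrierE P2E)
  then show ?thesis by (simp add: act_class pgl_mult matrix_vector_mul_assoc)
qed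

lemma act_one: "p \<in> P2 \<Longrightarrow> pgl_act \<one>\<^bsub>PGL3\<^esub> p = p"
  by (elim P2E) (simp add: act_class PGL3_one)

lemma act_fixed: assumes "pgl_act (pgl_class A) (proj_class v) = proj_class v"
  shows "\<exists>l. A *v v = l *s v"
proof -
  have "A *v v \<in> proj_class v" using assms proj_class_self[of "A *v v"] by (simp add: act_class)
  then show ?thesis unfolding proj_class_mem by blast
qed


lemma orb_mem: "q \<in> pgl_orbit H p \<longleftrightarrow> (\<exists>X\<in>H. q = pgl_act X p)"
  unfolding pgl_orbit_def 
  apply (rule iffI)
   apply (erule CollectE, elim exE conjE)
   apply (rule bexI, assumption, assumption)
  apply (erule bexE, rule CollectI, rule exI, rule conjI, assumption, assumption)
  done
definition sig :: "(complex^3) set set \<Rightarrow> (complex^3^3) set \<Rightarrow> (complex^3) set \<Rightarrow> (complex^3) set"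
  where "sig Ob X = (\<lambda>q. if q \<in> Ob then pgl_act X q else q)"

context
  fixes H assumes sg: "subgroup H PGL3"
begin

lemma H_car: "X \<in> H \<Longrightarrow> X \<in> carrier PGL3"
  by (rule subgroup.mem_carrier[OF sg])

lemma H_mult: "X \<in> H \<Longrightarrow> Y \<in> H \<Longrightarrow> X \<otimes>\<^bsub>PGL3\<^esub> Y \<in> H"
  by (rule subgroup.m_closed[OF sg])

lemma H_inv: "X \<in> H \<Longrightarrow> inv\<^bsub>PGL3\<^esub> X \<in> H"
  by (rule subgroup.m_inv_closed[OF sg])

lemma H_one: "\<one>\<^bsub>PGL3\<^esub> \<in> H"
  by (rule subgroup.one_closed[OF sg])

lemma act_H_P2: "X \<in> H \<Longrightarrow> p \<in> P2 \<Longrightarrow> pgl_act X p \<in> P2"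
  by (rule act_P2[OF H_car])

lemma act_inv: assumes "X \<in> H" "p \<in> P2" shows "pgl_act (inv\<^bsub>PGL3\<^esub> X) (pgl_act X p) = p"
proof -
  have "pgl_act (inv\<^bsub>PGL3\<^esub> X) (pgl_act X p) = pgl_act (inv\<^bsub>PGL3\<^esub> X \<otimes>\<^bsub>PGL3\<^esub> X) p"
    using assms by (simp add: act_mult H_car H_inv)
  also have "inv\<^bsub>PGL3\<^esub> X \<otimes>\<^bsub>PGL3\<^esub> X = \<one>\<^bsub>PGL3\<^esub>"
    using group.l_inv[OF PGL3_group H_car[OF assms(1)]] .
  finally show ?thesis using assms(2) by (simp add: act_one)
qed

lemma orb_P2: "p \<in> P2 \<Longrightarrow> pgl_orbit H p \<subseteq> P2"
  unfolding pgl_orbit_def using act_H_P2 by blast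

lemma orb_self: "p \<in> P2 \<Longrightarrow> p \<in> pgl_orbit H p"
  unfolding orb_mem using H_one act_one by metis

lemma orb_sub: assumes "p \<in> P2" "q \<in> pgl_orbit H p" shows "pgl_orbit H q \<subseteq> pgl_orbit H p"
proof
  fix r assume "r \<in> pgl_orbit H q"
  then obtain Y where Y: "Y \<in> H" "r = pgl_act Y q" unfolding orb_mem by blast
  obtain X where X: "X \<in> H" "q = pgl_act X p" using assms(2) unfolding orb_mem by blast
  have "r = pgl_act (Y \<otimes>\<^bsub>PGL3\<^esub> X) p" using X Y assms(1) by (simp add: act_mult H_car)
  then show "r \<in> pgl_orbit H p" unfolding orb_mem using H_mult X Y by blast
qed

lemma orb_sym: assumes "p \<in> P2" "q \<in> pgl_orbit H p" shows "p \<in> pgl_orbit H q"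
proof -
  obtain X where X: "X \<in> H" "q = pgl_act X p" using assms(2) unfolding orb_mem by blast
  then show ?thesis unfolding orb_mem using act_inv[OF X(1) assms(1)] H_inv by metis
qed

lemma orb_eq: assumes "p \<in> P2" "q \<in> pgl_orbit H p" shows "pgl_orbit H q = pgl_orbit H p"
proof
  show "pgl_orbit H q \<subseteq> pgl_orbit H p" by (rule orb_sub[OF assms])
  have "q \<in> P2" using assms orb_P2 by blast
  then show "pgl_orbit H p \<subseteq> pgl_orbit H q" using orb_sub orb_sym assms by blast
qed

lemma orb_disj: assumes "p \<in> P2" "q \<in> P2" "pgl_orbit H p \<noteq> pgl_orbit H q"
  shows "pgl_orbit H p \<inter> pgl_orbit H q = {}"
  using assms orb_eq by blast

lemma act_in_orb: assumes "p \<in> P2" "X \<in> H" "q \<in> pgl_orbit H p" shows "pgl_act X q \<in> pgl_orbit H p"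
proof -
  have "q \<in> P2" using assms orb_P2 by blast
  then have "pgl_act X q \<in> pgl_orbit H q" unfolding orb_mem using assms by blast
  then show ?thesis using orb_eq assms by blast
qed

lemma sig_permutes: assumes "p \<in> P2" "X \<in> H" "finite (pgl_orbit H p)"
  shows "sig (pgl_orbit H p) X permutes (pgl_orbit H p)"
proof (rule bij_imp_permutes)
  let ?O = "pgl_orbit H p"
  have inj: "inj_on (sig ?O X) ?O"
  proof (rule inj_onI)
    fix q r assume qr: "q \<in> ?O" "r \<in> ?O" "sig ?O X q = sig ?O X r"
    then have "q \<in> P2" "r \<in> P2" using orb_P2 assms by blast+
    then show "q = r" using qr act_inv[OF assms(2)] unfolding sig_def by metis
  qed
  have sub: "sig ?O X ` ?O \<subseteq> ?O" unfolding sig_def using act_in_orb assms by auto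
  have "sig ?O X ` ?O = ?O" by (rule endo_inj_surj[OF assms(3) sub inj])
  then show "bij_betw (sig ?O X) ?O ?O" using inj unfolding bij_betw_def by blast
  show "\<And>x. x \<notin> ?O \<Longrightarrow> sig ?O X x = x" unfolding sig_def by simp
qed

lemma sig_mult: assumes "p \<in> P2" "X \<in> H" "Y \<in> H"
  shows "sig (pgl_orbit H p) (X \<otimes>\<^bsub>PGL3\<^esub> Y) = sig (pgl_orbit H p) X \<circ> sig (pgl_orbit H p) Y"
proof
  fix q
  show "sig (pgl_orbit H p) (X \<otimes>\<^bsub>PGL3\<^esub> Y) q = (sig (pgl_orbit H p) X \<circ> sig (pgl_orbit H p) Y) q"
  proof (cases "q \<in> pgl_orbit H p")
    case True
    then have "q \<in> P2" using orb_P2 assms by blast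
    then show ?thesis using True act_in_orb[OF assms(1) assms(3) True] assms
      unfolding sig_def by (simp add: act_mult H_car)
  qed (simp add: sig_def)
qed

lemma sig_one: assumes "p \<in> P2" shows "sig (pgl_orbit H p) \<one>\<^bsub>PGL3\<^esub> = id"
proof
  fix q show "sig (pgl_orbit H p) \<one>\<^bsub>PGL3\<^esub> q = id q"
    using orb_P2[OF assms] act_one unfolding sig_def by auto
qed

end

lemma perm3: assumes "finite Ob" "card Ob = 3" "s permutes Ob" "s \<circ> s = id" "sign s = (1::int)"
  shows "s = id"
proof (rule ccontr)
  assume "s \<noteq> id"
  then obtain x where x: "s x \<noteq> x" by (auto simp: fun_eq_iff)
  then have xOb: "x \<in> Ob" using assms(3) permutes_not_in by metis
  define y where "y = s x"
  have yO: "y \<in> Ob" using xOb assms(3) y_def permutes_in_image by metis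
  have sy: "s y = x" using assms(4) y_def by (metis comp_apply id_apply)
  have xy: "x \<noteq> y" using x y_def by simp
  have "s = Transposition.transpose x y"
  proof
    fix z show "s z = Transposition.transpose x y z"
    proof (cases "z = x \<or> z = y")
      case True then show ?thesis using sy y_def by auto
    next
      case False
      show ?thesis
      proof (rule ccontr)
        assume "s z \<noteq> Transposition.transpose x y z"
        then have sz: "s z \<noteq> z" using False by simp
        then have zO: "z \<in> Ob" using assms(3) permutes_not_in by metis
        have szO: "s z \<in> Ob" using zO assms(3) permutes_in_image by metis
        have inj: "inj s" using assms(3) permutes_inj by blast
        have "s z \<noteq> x" using inj sy False by (metis injD)
        moreover have "s z \<noteq> y" using inj y_def False by (metis injD)
        ultimately have "card {x, y, z, s z} = 4" using False xy sz by auto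
        moreover have "{x, y, z, s z} \<subseteq> Ob" using xOb yO zO szO by auto
        ultimately have "4 \<le> card Ob" using assms(1) card_mono by metis
        then show False using assms(2) by simp
      qed
    qed
  qed
  then have "sign s = (-1::int)" using xy by (simp add: sign_swap_id)
  then show False using assms(5) by simp
qed


context
  fixes H assumes sg: "subgroup H PGL3"
begin

lemma sig_perm: "p \<in> P2 \<Longrightarrow> X \<in> H \<Longrightarrow> finite (pgl_orbit H p) \<Longrightarrow> permutation (sig (pgl_orbit H p) X)"
  using sig_permutes[OF sg] permutation_permutes by blast

lemma fix_orb:
  assumes p: "p \<in> P2" and fin: "finite (pgl_orbit H p)" and c3: "card (pgl_orbit H p) = 3"
    and H: "Xx \<in> H" "Xy \<in> H" "Xx' \<in> H" "Xy' \<in> H"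
    and inv: "Xx \<otimes>\<^bsub>PGL3\<^esub> Xx' = \<one>\<^bsub>PGL3\<^esub>" "Xy \<otimes>\<^bsub>PGL3\<^esub> Xy' = \<one>\<^bsub>PGL3\<^esub>"
    and Xa: "Xa = ((Xx \<otimes>\<^bsub>PGL3\<^esub> Xy) \<otimes>\<^bsub>PGL3\<^esub> Xx') \<otimes>\<^bsub>PGL3\<^esub> Xy'"
    and sq: "Xa \<otimes>\<^bsub>PGL3\<^esub> Xa = \<one>\<^bsub>PGL3\<^esub>"
    and r: "r \<in> pgl_orbit H p"
  shows "pgl_act Xa r = r"
proof -
  let ?O = "pgl_orbit H p"
  let ?s = "sig ?O"
  have XaH: "Xa \<in> H" using Xa H H_mult[OF sg] by metis
  have sa: "?s Xa = ?s Xx \<circ> ?s Xy \<circ> ?s Xx' \<circ> ?s Xy'"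
    using Xa H H_mult[OF sg] sig_mult[OF sg p] by metis
  have px: "permutation (?s Xx)" "permutation (?s Xy)" "permutation (?s Xx')" "permutation (?s Xy')"
    using sig_perm p fin H by blast+
  have "?s Xx \<circ> ?s Xx' = id" using sig_mult[OF sg p H(1) H(3)] inv(1) sig_one[OF sg p] by metis
  then have 1: "sign (?s Xx) * sign (?s Xx') = (1::int)"
    using sign_compose[OF px(1) px(3)] by simp
  have "?s Xy \<circ> ?s Xy' = id" using sig_mult[OF sg p H(2) H(4)] inv(2) sig_one[OF sg p] by metis
  then have 2: "sign (?s Xy) * sign (?s Xy') = (1::int)"
    using sign_compose[OF px(2) px(4)] by simp
  have "sign (?s Xa) = sign (?s Xx) * sign (?s Xy) * sign (?s Xx') * sign (?s Xy')"
    unfolding sa by (simp add: sign_compose px permutation_compose)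
  also have "\<dots> = (sign (?s Xx) * sign (?s Xx')) * (sign (?s Xy) * sign (?s Xy'))"
    by (simp add: ac_simps)
  finally have sgn: "sign (?s Xa) = (1::int)" using 1 2 by simp
  have "?s Xa \<circ> ?s Xa = id" using sig_mult[OF sg p XaH XaH] sq sig_one[OF sg p] by metis
  then have "?s Xa = id" using perm3[OF fin c3 sig_permutes[OF sg p XaH fin] _ sgn] by blast
  then have "?s Xa r = r" by simp
  then show ?thesis using r unfolding sig_def by simp
qed

end


lemma smult_eq0: "(k::complex) *s (u::cv) = 0 \<longleftrightarrow> k = 0 \<or> u = 0"
  by (auto simp: vec_eq_iff)

lemma sq1: assumes "(A::cm) ** A = mat 1" "u \<noteq> 0" "A *v u = s *s u" shows "s = 1 \<or> s = -1"
proof -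
  have "u = (A ** A) *v u" using assms(1) by simp
  also have "\<dots> = (s * s) *s u" using assms(3)
    by (simp add: matrix_vector_mul_assoc[symmetric] vec_scal vector_smult_assoc)
  finally have h: "u = (s * s) *s u" .
  have "(s * s - 1) *s u = (s * s) *s u - 1 *s u" by (rule vector_sub_rdistrib)
  also have "\<dots> = 0" using h by simp
  finally have "s * s - 1 = 0" using assms(2) unfolding smult_eq0 by blast
  then have "s * s = 1" by simp
  then show ?thesis
    by (metis add.inverse_inverse mult_cancel_left1 mult_cancel_right1 mult_minus_right square_eq_1_iff)
qed

lemma mat_from_vec: assumes "\<And>z. (M::cm) *v z = k *s z" shows "M = mat k"
  using assms by (simp add: matrix_eq mat_vec_eq)

lemma L:
  fixes A B :: cm and u w :: cv and s t c :: complex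
  assumes AA: "A ** A = mat 1" and BB: "B ** B = mat 1" and MM: "(A ** B) ** (A ** B) = mat c"
    and nA: "\<And>k. A \<noteq> mat k" and nB: "\<And>k. B \<noteq> mat k" and nM: "\<And>k. A ** B \<noteq> mat k"
    and u: "u \<noteq> 0" and np: "\<And>k. w \<noteq> k *s u"
    and Au: "A *v u = s *s u" and Aw: "A *v w = s *s w" and Bu: "B *v u = t *s u" and Bw: "B *v w = t *s w"
  shows False
proof -
  have s: "s = 1 \<or> s = -1" using sq1[OF AA u Au] .
  have t: "t = 1 \<or> t = -1" using sq1[OF BB u Bu] .
  obtain y where y: "A *v y \<noteq> s *s y" using nA[of s] mat_from_vec by blast
  define x where "x = y - s *s (A *v y)"
  have AAy: "A *v (A *v y) = y" using AA by (simp add: matrix_vector_mul_assoc)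
  have Ax: "A *v x = (- s) *s x"
    unfolding x_def using s AAy
    by (auto simp: matrix_vector_mult_diff_distrib vec_scal vec_eq_iff algebra_simps)
  have x0: "x \<noteq> 0"
  proof
    assume "x = 0"
    then have "y = s *s (A *v y)" unfolding x_def by simp
    then have "A *v y = s *s (A *v (A *v y))" by (metis vec_scal)
    then show False using y AAy by simp
  qed
  have indep: "a = 0 \<and> b = 0 \<and> d = 0" if h: "a *s u + b *s w + d *s x = 0" for a b d
  proof -
    have "A *v (a *s u + b *s w + d *s x) = 0" using h by simp
    then have h2: "s *s (a *s u + b *s w) - s *s (d *s x) = 0"
      by (simp add: matrix_vector_right_distrib vec_scal Au Aw Ax vector_smult_assoc
          vector_add_ldistrib vector_smult_lneg algebra_simps mult.commute)
    have "s *s (a *s u + b *s w + d *s x) - (s *s (a *s u + b *s w) - s *s (d *s x)) = 0"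
      using h h2 by simp
    then have "(2 * s * d) *s x = 0" by (simp add: vec_eq_iff algebra_simps)
    then have d: "d = 0" using x0 s by (auto simp: smult_eq0)
    then have h3: "a *s u + b *s w = 0" using h by simp
    have b: "b = 0"
    proof (rule ccontr)
      assume "b \<noteq> 0"
      then have "w = (- a / b) *s u" using h3 by (simp add: vec_eq_iff field_simps add_eq_0_iff)
      then show False using np by blast
    qed
    then have "a = 0" using h3 u by (simp add: smult_eq0)
    then show ?thesis using b d by simp
  qed
  define P :: cm where "P = (\<chi> i j. if j = 1 then u $ i else if j = 2 then w $ i else x $ i)"
  have Pv: "P *v k = k $ 1 *s u + k $ 2 *s w + k $ 3 *s x" for k
    unfolding P_def by (simp add: vec_eq_iff matrix_vector_mult_def sum_3 mult.commute)
  have "inj ((*v) P)"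
  proof (rule injI)
    fix k1 k2 assume "P *v k1 = P *v k2"
    then have "P *v (k1 - k2) = 0" by (simp add: matrix_vector_mult_diff_distrib)
    then have "(k1 - k2) $ 1 = 0 \<and> (k1 - k2) $ 2 = 0 \<and> (k1 - k2) $ 3 = 0"
      unfolding Pv by (rule indep)
    then show "k1 = k2" by (simp add: vec_eq_iff forall_3)
  qed
  then obtain Q where "Q ** P = mat 1" using matrix_left_invertible_injective by blast
  then have PQ: "P ** Q = mat 1" using matrix_left_right_inverse by blast
  have span: "\<exists>a b d. z = a *s u + b *s w + d *s x" for z
  proof -
    have "z = P *v (Q *v z)" using PQ by (simp add: matrix_vector_mul_assoc)
    then show ?thesis unfolding Pv by blast
  qed
  have ext3: "M = mat k" if "M *v u = k *s u" "M *v w = k *s w" "M *v x = k *s x" for M k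
  proof (rule mat_from_vec)
    fix z
    obtain a b d where "z = a *s u + b *s w + d *s x" using span by blast
    then show "M *v z = k *s z" using that
      by (simp add: matrix_vector_right_distrib vec_scal vector_smult_assoc vector_add_ldistrib mult.commute)
  qed
  obtain al be ga where Bx: "B *v x = al *s u + be *s w + ga *s x" using span by blast
  have "x = B *v (B *v x)" using BB by (simp add: matrix_vector_mul_assoc)
  also have "\<dots> = (al * t) *s u + (be * t) *s w + ga *s (al *s u + be *s w + ga *s x)"
    unfolding Bx by (simp add: matrix_vector_right_distrib vec_scal Bu Bw Bx vector_smult_assoc vector_add_ldistrib mult.commute)
  finally have "(al * t + ga * al) *s u + (be * t + ga * be) *s w + (ga * ga - 1) *s x = 0"
    by (simp add: vec_eq_iff algebra_simps)
  then have co: "al * t + ga * al = 0" "be * t + ga * be = 0" "ga * ga - 1 = 0" using indep by blast+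
  show False
  proof (cases "t + ga = 0")
    case False
    then have "al = 0" "be = 0" using co by (auto simp: algebra_simps)
      (metis distrib_left mult.commute mult_eq_0_iff)+
    moreover have "ga = t" using False co(3) t
      by (metis add.inverse_inverse add_eq_0_iff eq_iff_diff_eq_0 mult_cancel_left1 mult_minus_right square_eq_1_iff)
    ultimately have "B *v x = t *s x" using Bx by simp
    then have "B = mat t" using ext3 Bu Bw by blast
    then show False using nB by blast
  next
    case True
    then have ga: "ga = - t" by (simp add: add_eq_0_iff)
    define M where "M = A ** B"
    have Mu: "M *v u = (s * t) *s u" unfolding M_def
      by (simp add: matrix_vector_mul_assoc[symmetric] Bu vec_scal Au vector_smult_assoc mult.commute)
    have Mw: "M *v w = (s * t) *s w" unfolding M_def
      by (simp add: matrix_vector_mul_assoc[symmetric] Bw vec_scal Aw vector_smult_assoc mult.commute)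
    have Mx: "M *v x = (al * s) *s u + (be * s) *s w + (s * t) *s x" unfolding M_def
      using ga by (simp add: matrix_vector_mul_assoc[symmetric] Bx matrix_vector_right_distrib vec_scal
          matrix_vector_mult_diff_distrib Au Aw Ax vector_smult_assoc vec_eq_iff algebra_simps)
    have "c *s x = M *v (M *v x)" using MM unfolding M_def by (simp add: matrix_vector_mul_assoc mat_vec_eq)
    also have "\<dots> = (al * s) *s ((s * t) *s u) + (be * s) *s ((s * t) *s w) + (s * t) *s ((al * s) *s u + (be * s) *s w + (s * t) *s x)"
      unfolding Mx by (simp add: matrix_vector_right_distrib vec_scal Mu Mw Mx)
    finally have "(2 * al * t) *s u + (2 * be * t) *s w + (1 - c) *s x = 0"
      using s t by (auto simp: vec_eq_iff algebra_simps)
    then have "2 * al * t = 0" "2 * be * t = 0" using indep by blast+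
    then have "al = 0" "be = 0" using t by auto
    then have "M *v x = (s * t) *s x" using Mx by simp
    then have "M = mat (s * t)" using ext3 Mu Mw by blast
    then show False using nM unfolding M_def by blast
  qed
qed


lemma class_one_eq: assumes "pgl_class M = pgl_class (mat 1)" shows "\<exists>c. c \<noteq> 0 \<and> M = mat c"
  using assms unfolding pgl_class_eq by simp

lemma sq_rep: assumes X: "X \<in> carrier PGL3" and sq: "X \<otimes>\<^bsub>PGL3\<^esub> X = \<one>\<^bsub>PGL3\<^esub>"
  shows "\<exists>A. X = pgl_class A \<and> invertible A \<and> A ** A = mat 1"
proof -
  obtain A0 where A0: "X = pgl_class A0" "invertible A0" using X by (elim PGL3_carrierE)
  have "pgl_class (A0 ** A0) = pgl_class (mat 1)" using sq A0 by (simp add: pgl_mult PGL3_one)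
  then obtain c where c: "c \<noteq> 0" "A0 ** A0 = mat c" using class_one_eq by blast
  define d where "d = csqrt c"
  have dd: "d * d = c" unfolding d_def by (metis power2_csqrt power2_eq_square)
  then have d0: "d \<noteq> 0" using c by auto
  define A where "A = mat (1/d) ** A0"
  have "A ** A = mat (1/d) ** (A0 ** (mat (1/d) ** A0))" unfolding A_def by (rule mat_mul_left[of "1/d" A0 "mat (1/d) ** A0"])
  also have "\<dots> = mat (1/d) ** (mat (1/d) ** (A0 ** A0))" using mat_mul_right[of A0 "1/d" A0] by argo
  also have "\<dots> = mat (1/d * (1/d)) ** mat c" using mat_mat_mul[of "1/d" "1/d" "A0 ** A0"] c(2) by argo
  also have "\<dots> = mat (1/d * (1/d) * c)" by (rule mat_mat)
  also have "1/d * (1/d) * c = 1" using dd d0 c(1) by (simp add: field_simps)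
  finally have "A ** A = mat 1" by simp
  moreover have "X = pgl_class A" using A0 d0 unfolding A_def by (simp add: pgl_class_scal)
  moreover have "invertible A" using A0 d0 unfolding A_def by (simp add: invertible_scal)
  ultimately show ?thesis by blast
qed

lemma not_scalar: assumes "pgl_class A \<noteq> \<one>\<^bsub>PGL3\<^esub>" "invertible A" shows "A \<noteq> mat k"
proof
  assume Ak: "A = mat k"
  have "k \<noteq> 0"
  proof
    assume "k = 0"
    then obtain A' where "A' ** A = mat 1" using assms(2) Ak unfolding invertible_def by blast
    then have "(mat 1 :: cm) = 0" using Ak \<open>k = 0\<close> by simp
    then have "(mat 1 :: cm) $ 1 $ 1 = 0" by simp
    then show False by (simp add: mat_def)
  qed
  then have "pgl_class A = pgl_class (mat 1)"
    unfolding pgl_class_eq Ak using mat_mat[of k 1] by auto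
  then show False using assms(1) by (simp add: PGL3_one)
qed


definition rep :: "cv set \<Rightarrow> cv" where "rep r = (SOME v. v \<noteq> 0 \<and> r = proj_class v)"
definition ev :: "cm \<Rightarrow> cv \<Rightarrow> complex" where "ev M v = (SOME l. M *v v = l *s v)"

lemma rep: "r \<in> P2 \<Longrightarrow> rep r \<noteq> 0 \<and> r = proj_class (rep r)"
  unfolding rep_def by (rule someI_ex) (auto elim: P2E)

lemma ev: "\<exists>l. M *v v = l *s v \<Longrightarrow> M *v v = ev M v *s v"
  unfolding ev_def by (rule someI_ex)

lemma core_geo:
  assumes sg: "subgroup H PGL3"
    and p: "p \<in> P2" and q: "q \<in> P2"
    and fp: "finite (pgl_orbit H p)" and cp: "card (pgl_orbit H p) = 3"
    and fq: "finite (pgl_orbit H q)" and cq: "card (pgl_orbit H q) = 3"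
    and ne: "pgl_orbit H p \<noteq> pgl_orbit H q"
    and XaH: "Xa \<in> H" and XbH: "Xb \<in> H"
    and sqa: "Xa \<otimes>\<^bsub>PGL3\<^esub> Xa = \<one>\<^bsub>PGL3\<^esub>" and sqb: "Xb \<otimes>\<^bsub>PGL3\<^esub> Xb = \<one>\<^bsub>PGL3\<^esub>"
    and sqab: "(Xa \<otimes>\<^bsub>PGL3\<^esub> Xb) \<otimes>\<^bsub>PGL3\<^esub> (Xa \<otimes>\<^bsub>PGL3\<^esub> Xb) = \<one>\<^bsub>PGL3\<^esub>"
    and na: "Xa \<noteq> \<one>\<^bsub>PGL3\<^esub>" and nb: "Xb \<noteq> \<one>\<^bsub>PGL3\<^esub>" and nab: "Xa \<otimes>\<^bsub>PGL3\<^esub> Xb \<noteq> \<one>\<^bsub>PGL3\<^esub>"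
    and fixa: "\<And>r. r \<in> pgl_orbit H p \<union> pgl_orbit H q \<Longrightarrow> pgl_act Xa r = r"
    and fixb: "\<And>r. r \<in> pgl_orbit H p \<union> pgl_orbit H q \<Longrightarrow> pgl_act Xb r = r"
  shows False
proof -
  let ?S = "pgl_orbit H p \<union> pgl_orbit H q"
  have SP2: "?S \<subseteq> P2" using orb_P2[OF sg p] orb_P2[OF sg q] by blast
  have "pgl_orbit H p \<inter> pgl_orbit H q = {}" by (rule orb_disj[OF sg p q ne])
  then have cS: "card ?S = 6" using fp fq cp cq by (simp add: card_Un_disjoint)
  have fS: "finite ?S" using fp fq by simp
  obtain A where A: "Xa = pgl_class A" "invertible A" "A ** A = mat 1"
    using sq_rep[OF H_car[OF sg XaH] sqa] by blast
  obtain B where B: "Xb = pgl_class B" "invertible B" "B ** B = mat 1"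
    using sq_rep[OF H_car[OF sg XbH] sqb] by blast
  have XaXb: "Xa \<otimes>\<^bsub>PGL3\<^esub> Xb = pgl_class (A ** B)" using A B by (simp add: pgl_mult)
  have "pgl_class ((A ** B) ** (A ** B)) = pgl_class (mat 1)"
    using sqab unfolding XaXb by (simp add: pgl_mult PGL3_one)
  then obtain c where MM: "(A ** B) ** (A ** B) = mat c" using class_one_eq by blast
  have nA: "\<And>k. A \<noteq> mat k" using not_scalar na A by blast
  have nB: "\<And>k. B \<noteq> mat k" using not_scalar nb B by blast
  have nM: "\<And>k. A ** B \<noteq> mat k" using not_scalar[of "A ** B"] nab XaXb invertible_mult' A B by metis
  have eig: "M *v rep r = ev M (rep r) *s rep r \<and> (ev M (rep r) = 1 \<or> ev M (rep r) = -1)"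
    if "r \<in> ?S" "M ** M = mat 1" "pgl_act (pgl_class M) r = r" for M r
  proof -
    have r: "rep r \<noteq> 0" "r = proj_class (rep r)" using rep SP2 that(1) by blast+
    then have "\<exists>l. M *v rep r = l *s rep r" using act_fixed that(3) by metis
    then have e: "M *v rep r = ev M (rep r) *s rep r" by (rule ev)
    then show ?thesis using sq1[OF that(2) r(1) e] by blast
  qed
  define f where "f r = (ev A (rep r), ev B (rep r))" for r
  have fimg: "f ` ?S \<subseteq> {1, -1} \<times> {1, -1}"
  proof
    fix z assume "z \<in> f ` ?S"
    then obtain r where r: "r \<in> ?S" "z = f r" by blast
    have "ev A (rep r) = 1 \<or> ev A (rep r) = -1" using eig[OF r(1) A(3)] fixa r(1) A(1) by metis
    moreover have "ev B (rep r) = 1 \<or> ev B (rep r) = -1" using eig[OF r(1) B(3)] fixb r(1) B(1) by metis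
    ultimately show "z \<in> {1, -1} \<times> {1, -1}" using r(2) unfolding f_def by blast
  qed
  have "card ({1, -1::complex} \<times> {1, -1::complex}) = 4" by (simp add: card_cartesian_product)
  then have "\<not> inj_on f ?S" using card_inj_on_le[of f ?S "{1, -1} \<times> {1, -1}"] fimg cS by auto
  then obtain r1 r2 where r12: "r1 \<in> ?S" "r2 \<in> ?S" "r1 \<noteq> r2" "f r1 = f r2"
    unfolding inj_on_def by blast
  define u where "u = rep r1"
  define w where "w = rep r2"
  have ur: "u \<noteq> 0" "r1 = proj_class u" using rep SP2 r12(1) unfolding u_def by blast+
  have wr: "w \<noteq> 0" "r2 = proj_class w" using rep SP2 r12(2) unfolding w_def by blast+
  have np: "w \<noteq> k *s u" for k
  proof
    assume wk: "w = k *s u"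
    then have "k \<noteq> 0" using wr(1) by auto
    then have "r2 = r1" using ur wr wk by (simp add: proj_class_scal)
    then show False using r12(3) by simp
  qed
  have evs: "ev A w = ev A u" "ev B w = ev B u" using r12(4) unfolding f_def u_def w_def by auto
  have Au: "A *v u = ev A u *s u" using eig[OF r12(1) A(3)] fixa r12(1) A(1) unfolding u_def by metis
  have Aw: "A *v w = ev A u *s w" using eig[OF r12(2) A(3)] fixa r12(2) A(1) evs unfolding w_def by metis
  have Bu: "B *v u = ev B u *s u" using eig[OF r12(1) B(3)] fixb r12(1) B(1) unfolding u_def by metis
  have Bw: "B *v w = ev B u *s w" using eig[OF r12(2) B(3)] fixb r12(2) B(1) evs unfolding w_def by metis
  show False using L[OF A(3) B(3) MM nA nB nM ur(1) np Au Aw Bu Bw] .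
qed


definition cyc :: "nat \<Rightarrow> nat \<Rightarrow> nat \<Rightarrow> nat \<Rightarrow> nat"
  where "cyc a b c = Transposition.transpose a c \<circ> Transposition.transpose a b"

definition pa :: "nat \<Rightarrow> nat" where "pa = Transposition.transpose 1 2 \<circ> Transposition.transpose 3 4"
definition pb :: "nat \<Rightarrow> nat" where "pb = Transposition.transpose 1 3 \<circ> Transposition.transpose 2 4"

lemma tr_in: "a \<in> {1..4} \<Longrightarrow> b \<in> {1..4} \<Longrightarrow> a \<noteq> b \<Longrightarrow>
  Transposition.transpose a b permutes {1..4::nat} \<and> \<not> evenperm (Transposition.transpose a b) \<and> permutation (Transposition.transpose a b)"
  by (simp add: permutes_swap_id evenperm_swap permutation_swap_id)

lemma two_tr_alt: assumes "a \<in> {1..4}" "b \<in> {1..4}" "a \<noteq> b" "c \<in> {1..4}" "d \<in> {1..4}" "c \<noteq> d"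
  shows "Transposition.transpose a b \<circ> Transposition.transpose c d \<in> carrier (alt_group 4)"
proof -
  have 1: "Transposition.transpose a b permutes {1..4::nat}" "\<not> evenperm (Transposition.transpose a b)"
    "permutation (Transposition.transpose a b)" using tr_in[OF assms(1-3)] by auto
  have 2: "Transposition.transpose c d permutes {1..4::nat}" "\<not> evenperm (Transposition.transpose c d)"
    "permutation (Transposition.transpose c d)" using tr_in[OF assms(4-6)] by auto
  show ?thesis unfolding alt_group_carrier
    using permutes_compose[OF 2(1) 1(1)] evenperm_comp[OF 1(3) 2(3)] 1(2) 2(2) by simp
qed

lemma cyc_alt: "a \<in> {1..4} \<Longrightarrow> b \<in> {1..4} \<Longrightarrow> c \<in> {1..4} \<Longrightarrow> a \<noteq> b \<Longrightarrow> a \<noteq> c \<Longrightarrow>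
  cyc a b c \<in> carrier (alt_group 4)"
  unfolding cyc_def by (rule two_tr_alt) auto

lemma elems_alt:
  "pa \<in> carrier (alt_group 4)" "pb \<in> carrier (alt_group 4)"
  "cyc 2 3 4 \<in> carrier (alt_group 4)" "cyc 2 4 3 \<in> carrier (alt_group 4)"
  "cyc 1 3 2 \<in> carrier (alt_group 4)" "cyc 1 2 3 \<in> carrier (alt_group 4)"
  "cyc 1 4 2 \<in> carrier (alt_group 4)" "cyc 1 2 4 \<in> carrier (alt_group 4)"
  unfolding pa_def pb_def by (auto intro!: cyc_alt two_tr_alt)

lemma eqs:
  "pa = cyc 2 3 4 \<circ> cyc 1 3 2 \<circ> cyc 2 4 3 \<circ> cyc 1 2 3"
  "pb = cyc 2 3 4 \<circ> cyc 1 4 2 \<circ> cyc 2 4 3 \<circ> cyc 1 2 4"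
  "cyc 2 3 4 \<circ> cyc 2 4 3 = id" "cyc 1 3 2 \<circ> cyc 1 2 3 = id" "cyc 1 4 2 \<circ> cyc 1 2 4 = id"
  "pa \<circ> pa = id" "pb \<circ> pb = id" "(pa \<circ> pb) \<circ> (pa \<circ> pb) = id"
  "pa \<noteq> id" "pb \<noteq> id" "pa \<circ> pb \<noteq> id"
  unfolding pa_def pb_def cyc_def by (auto simp: fun_eq_iff Transposition.transpose_def)


lemma core_grp:
  assumes sg: "subgroup H PGL3"
    and p: "p \<in> P2" and q: "q \<in> P2"
    and fp: "finite (pgl_orbit H p)" and cp: "card (pgl_orbit H p) = 3"
    and fq: "finite (pgl_orbit H q)" and cq: "card (pgl_orbit H q) = 3"
    and ne: "pgl_orbit H p \<noteq> pgl_orbit H q"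
    and G: "group G" "mult G = (\<circ>)" "one G = id" "carrier (alt_group 4) \<subseteq> carrier G"
    and psi: "\<psi> \<in> hom G (PGL3\<lparr>carrier := H\<rparr>)" and inj: "inj_on \<psi> (carrier G)"
  shows False
proof -
  have HG: "group (PGL3\<lparr>carrier := H\<rparr>)" by (rule subgroup.subgroup_is_group[OF sg PGL3_group])
  have inC: "x \<in> carrier G" if "x \<in> carrier (alt_group 4)" for x using G(4) that by blast
  have hm: "\<psi> (x \<circ> y) = \<psi> x \<otimes>\<^bsub>PGL3\<^esub> \<psi> y" if "x \<in> carrier G" "y \<in> carrier G" for x y
    using hom_mult[OF psi that] G(2) by simp
  have hH: "\<psi> x \<in> H" if "x \<in> carrier G" for x
    using psi that unfolding hom_def by auto
  have h1: "\<psi> id = \<one>\<^bsub>PGL3\<^esub>" using hom_one[OF psi G(1) HG] G(3) by simp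
  have mc: "x \<circ> y \<in> carrier G" if "x \<in> carrier G" "y \<in> carrier G" for x y
    using group.is_monoid[OF G(1)] monoid.m_closed that G(2) by metis
  have idC: "id \<in> carrier G" using group.is_monoid[OF G(1)] monoid.one_closed G(3) by metis
  have nid: "\<psi> x \<noteq> \<one>\<^bsub>PGL3\<^esub>" if "x \<in> carrier G" "x \<noteq> id" for x
    using inj that idC h1 unfolding inj_on_def by metis
  note E = inC[OF elems_alt(1)] inC[OF elems_alt(2)] inC[OF elems_alt(3)] inC[OF elems_alt(4)]
    inC[OF elems_alt(5)] inC[OF elems_alt(6)] inC[OF elems_alt(7)] inC[OF elems_alt(8)]
  define Xa where "Xa = \<psi> pa"
  define Xb where "Xb = \<psi> pb"
  have XaH: "Xa \<in> H" and XbH: "Xb \<in> H" unfolding Xa_def Xb_def using hH E by auto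
  have sqa: "Xa \<otimes>\<^bsub>PGL3\<^esub> Xa = \<one>\<^bsub>PGL3\<^esub>" unfolding Xa_def using hm[OF E(1) E(1)] eqs(6) h1 by simp
  have sqb: "Xb \<otimes>\<^bsub>PGL3\<^esub> Xb = \<one>\<^bsub>PGL3\<^esub>" unfolding Xb_def using hm[OF E(2) E(2)] eqs(7) h1 by simp
  have ab: "Xa \<otimes>\<^bsub>PGL3\<^esub> Xb = \<psi> (pa \<circ> pb)" unfolding Xa_def Xb_def using hm[OF E(1) E(2)] by simp
  have abC: "pa \<circ> pb \<in> carrier G" using mc E by blast
  have sqab: "(Xa \<otimes>\<^bsub>PGL3\<^esub> Xb) \<otimes>\<^bsub>PGL3\<^esub> (Xa \<otimes>\<^bsub>PGL3\<^esub> Xb) = \<one>\<^bsub>PGL3\<^esub>"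
    unfolding ab using hm[OF abC abC] eqs(8) h1 by simp
  have na: "Xa \<noteq> \<one>\<^bsub>PGL3\<^esub>" unfolding Xa_def using nid[OF E(1) eqs(9)] .
  have nb: "Xb \<noteq> \<one>\<^bsub>PGL3\<^esub>" unfolding Xb_def using nid[OF E(2) eqs(10)] .
  have nab: "Xa \<otimes>\<^bsub>PGL3\<^esub> Xb \<noteq> \<one>\<^bsub>PGL3\<^esub>" unfolding ab using nid[OF abC eqs(11)] .
  have comm: "\<psi> (x \<circ> y \<circ> x' \<circ> y') = ((\<psi> x \<otimes>\<^bsub>PGL3\<^esub> \<psi> y) \<otimes>\<^bsub>PGL3\<^esub> \<psi> x') \<otimes>\<^bsub>PGL3\<^esub> \<psi> y'"
    if "x \<in> carrier G" "y \<in> carrier G" "x' \<in> carrier G" "y' \<in> carrier G" for x y x' y'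
    using that hm mc by metis
  have fix_all: "pgl_act X r = r"
    if X: "X = \<psi> (x \<circ> y \<circ> x' \<circ> y')" "x \<in> carrier G" "y \<in> carrier G" "x' \<in> carrier G" "y' \<in> carrier G"
      "x \<circ> x' = id" "y \<circ> y' = id" "X \<otimes>\<^bsub>PGL3\<^esub> X = \<one>\<^bsub>PGL3\<^esub>"
    and r: "r \<in> pgl_orbit H p \<union> pgl_orbit H q" for X x y x' y' r
  proof -
    have i1: "\<psi> x \<otimes>\<^bsub>PGL3\<^esub> \<psi> x' = \<one>\<^bsub>PGL3\<^esub>" using hm[OF X(2) X(4)] X(6) h1 by simp
    have i2: "\<psi> y \<otimes>\<^bsub>PGL3\<^esub> \<psi> y' = \<one>\<^bsub>PGL3\<^esub>" using hm[OF X(3) X(5)] X(7) h1 by simp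
    have XX: "X = ((\<psi> x \<otimes>\<^bsub>PGL3\<^esub> \<psi> y) \<otimes>\<^bsub>PGL3\<^esub> \<psi> x') \<otimes>\<^bsub>PGL3\<^esub> \<psi> y'"
      using comm[OF X(2-5)] X(1) by simp
    show ?thesis
    proof (cases "r \<in> pgl_orbit H p")
      case True
      show ?thesis by (rule fix_orb[OF sg p fp cp hH[OF X(2)] hH[OF X(3)] hH[OF X(4)] hH[OF X(5)] i1 i2 XX X(8) True])
    next
      case False
      then have "r \<in> pgl_orbit H q" using r by blast
      then show ?thesis by (rule fix_orb[OF sg q fq cq hH[OF X(2)] hH[OF X(3)] hH[OF X(4)] hH[OF X(5)] i1 i2 XX X(8)])
    qed
  qed
  have fixa: "pgl_act Xa r = r" if "r \<in> pgl_orbit H p \<union> pgl_orbit H q" for r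
    by (rule fix_all[OF _ E(3) E(5) E(4) E(6) eqs(3) eqs(4) sqa that]) (simp add: Xa_def eqs(1))
  have fixb: "pgl_act Xb r = r" if "r \<in> pgl_orbit H p \<union> pgl_orbit H q" for r
    by (rule fix_all[OF _ E(3) E(7) E(4) E(8) eqs(3) eqs(5) sqb that]) (simp add: Xb_def eqs(2))
  show False
    by (rule core_geo[OF sg p q fp cp fq cq ne XaH XbH sqa sqb sqab na nb nab fixa fixb])
qed

theorem lemma4p2:
  fixes H :: "(complex^3^3) set set"
  assumes "subgroup H PGL3"
    and "finite H"
    and "PGL3\<lparr>carrier := H\<rparr> \<cong> sym_group 4 \<or> PGL3\<lparr>carrier := H\<rparr> \<cong> alt_group 4"
  shows "(\<exists>p\<in>P2. \<forall>X\<in>H. pgl_act X p = p)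
    \<or> (\<forall>p\<in>P2. \<forall>q\<in>P2. card (pgl_orbit H p) = 3 \<and> card (pgl_orbit H q) = 3
          \<longrightarrow> pgl_orbit H p = pgl_orbit H q)"
proof -
  have HG: "group (PGL3\<lparr>carrier := H\<rparr>)" by (rule subgroup.subgroup_is_group[OF assms(1) PGL3_group])
  obtain G :: "(nat \<Rightarrow> nat) monoid" where G: "group G" "mult G = (\<circ>)" "one G = id" "carrier (alt_group 4) \<subseteq> carrier G"
    and iso: "PGL3\<lparr>carrier := H\<rparr> \<cong> G"
  proof (cases "PGL3\<lparr>carrier := H\<rparr> \<cong> sym_group 4")
    case True
    have sub: "carrier (alt_group 4) \<subseteq> carrier (sym_group 4)"
      using alt_group_is_subgroup subgroup.subset by blast
    show ?thesis by (rule that[OF sym_group_is_group sym_group_mult sym_group_one sub True])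
  next
    case False
    then have "PGL3\<lparr>carrier := H\<rparr> \<cong> alt_group 4" using assms(3) by blast
    moreover have "mult (alt_group 4) = (\<circ>)" by (simp add: alt_group_def sym_group_mult)
    moreover have "one (alt_group 4) = id" by (simp add: alt_group_def sym_group_one)
    ultimately show ?thesis using that[OF alt_group_is_group] by simp
  qed
  have "G \<cong> PGL3\<lparr>carrier := H\<rparr>" by (rule group.iso_sym[OF HG iso])
  then obtain \<psi> where psi: "\<psi> \<in> Group.iso G (PGL3\<lparr>carrier := H\<rparr>)" unfolding is_iso_def by blast
  then have hom: "\<psi> \<in> hom G (PGL3\<lparr>carrier := H\<rparr>)" and "bij_betw \<psi> (carrier G) H"
    unfolding Group.iso_def by auto
  then have inj: "inj_on \<psi> (carrier G)" unfolding bij_betw_def by blast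
  have "\<forall>p\<in>P2. \<forall>q\<in>P2. card (pgl_orbit H p) = 3 \<and> card (pgl_orbit H q) = 3
          \<longrightarrow> pgl_orbit H p = pgl_orbit H q"
  proof (intro ballI impI)
    fix p q assume p: "p \<in> P2" and q: "q \<in> P2"
      and c: "card (pgl_orbit H p) = 3 \<and> card (pgl_orbit H q) = 3"
    have fp: "finite (pgl_orbit H p)" using c card.infinite by fastforce
    have fq: "finite (pgl_orbit H q)" using c card.infinite by fastforce
    show "pgl_orbit H p = pgl_orbit H q"
    proof (rule ccontr)
      assume ne: "pgl_orbit H p \<noteq> pgl_orbit H q"
      show False using core_grp[OF assms(1) p q fp _ fq _ ne G hom inj] c by blast
    qed
  qed
  then show ?thesis by blast
qed


end
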